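(* Let $X$ be a discretely geodesic metric space with $\beta$-stable intervals. For all $x,y,z\in X$ there exists a point $v\in I(x,y)$ with $d(z,v)\le\beta\cdot 2(x\mid y)_z$.
   Context: $(x\mid y)_z=\frac12(d(z,x)+d(z,y)-d(x,y))$. $X$ is discretely geodesic if $d$ is integer valued and any $x,y$ are joined by an isometric embedding $\gamma\colon\{0,\dots,d(x,y)\}\to X$ with $\gamma(0)=x,\gamma(d(x,y))=y$. $I(x,y)=\{u: d(x,u)+d(u,y)=d(x,y)\}$. $\beta$-stable intervals: for all $x,y,y'$ with $d(y,y')=1$, the Hausdorff distance between $I(x,y)$ and $I(x,y')$ is at most $\beta$. *)

theory Defs
  imports "HOL-Analysis.Analysis" "HOL-Library.Extended_Real"
begin

definition gromov_product :: "('a \<Rightarrow> 'a \<Rightarrow> real) \<Rightarrow> 'a \<Rightarrow> 'a \<Rightarrow> 'a \<Rightarrow> real" where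
  "gromov_product d x y z = (d z x + d z y - d x y) / 2"

definition discretely_geodesic :: "'a set \<Rightarrow> ('a \<Rightarrow> 'a \<Rightarrow> real) \<Rightarrow> bool" where
  "discretely_geodesic X d \<longleftrightarrow>
     (\<forall>x\<in>X. \<forall>y\<in>X. d x y \<in> \<int>) \<and>
     (\<forall>x\<in>X. \<forall>y\<in>X. \<exists>\<gamma> :: nat \<Rightarrow> 'a.
        (\<forall>i \<le> nat \<lfloor>d x y\<rfloor>. \<gamma> i \<in> X) \<and> \<gamma> 0 = x \<and> \<gamma> (nat \<lfloor>d x y\<rfloor>) = y \<and>
        (\<forall>i \<le> nat \<lfloor>d x y\<rfloor>. \<forall>j \<le> nat \<lfloor>d x y\<rfloor>. d (\<gamma> i) (\<gamma> j) = \<bar>real i - real j\<bar>))"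

definition interval :: "'a set \<Rightarrow> ('a \<Rightarrow> 'a \<Rightarrow> real) \<Rightarrow> 'a \<Rightarrow> 'a \<Rightarrow> 'a set" where
  "interval X d x y = {u \<in> X. d x u + d u y = d x y}"

definition hausdorff_distance :: "('a \<Rightarrow> 'a \<Rightarrow> real) \<Rightarrow> 'a set \<Rightarrow> 'a set \<Rightarrow> ereal" where
  "hausdorff_distance d A B =
     max (SUP a\<in>A. INF b\<in>B. ereal (d a b)) (SUP b\<in>B. INF a\<in>A. ereal (d b a))"

definition stable_intervals :: "'a set \<Rightarrow> ('a \<Rightarrow> 'a \<Rightarrow> real) \<Rightarrow> real \<Rightarrow> bool" where
  "stable_intervals X d \<beta> \<longleftrightarrow>
     (\<forall>x\<in>X. \<forall>y\<in>X. \<forall>y'\<in>X. d y y' = 1 \<longrightarrow>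
        hausdorff_distance d (interval X d x y) (interval X d x y') \<le> ereal \<beta>)"

end

theory Submission
  imports Defs
begin

lemma int_pos_ge1: "(a::real) \<in> \<int> \<Longrightarrow> a > 0 \<Longrightarrow> a \<ge> 1"
  by (elim Ints_cases) simp

lemma neighbor:
  assumes M: "Metric_space X d" and G: "discretely_geodesic X d"
    and y: "y \<in> X" and z: "z \<in> X" and ne: "y \<noteq> z"
  shows "\<exists>y'\<in>X. d y y' = 1 \<and> d y' z = d y z - 1"
proof -
  interpret Metric_space X d by fact
  obtain \<gamma> where g: "\<forall>i \<le> nat \<lfloor>d y z\<rfloor>. \<gamma> i \<in> X" "\<gamma> 0 = y" "\<gamma> (nat \<lfloor>d y z\<rfloor>) = z"
    "\<forall>i \<le> nat \<lfloor>d y z\<rfloor>. \<forall>j \<le> nat \<lfloor>d y z\<rfloor>. d (\<gamma> i) (\<gamma> j) = \<bar>real i - real j\<bar>"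
    using G y z unfolding discretely_geodesic_def by blast
  have I: "d y z \<in> \<int>" using G y z unfolding discretely_geodesic_def by blast
  have pos: "d y z > 0" using ne y z by simp
  then have ge1: "d y z \<ge> 1" using int_pos_ge1 I by blast
  define N where "N = nat \<lfloor>d y z\<rfloor>"
  have RN: "real N = d y z" using I pos unfolding N_def
    by (metis Ints_cases floor_of_int less_imp_le of_int_0_le_iff of_nat_nat)
  have N1: "1 \<le> N" using RN ge1 by linarith
  have "\<gamma> 1 \<in> X" using g N1 N_def by auto
  moreover have "d (\<gamma> 0) (\<gamma> 1) = \<bar>real 0 - real 1\<bar>" using g(4) N1 unfolding N_def[symmetric] by blast
  then have "d y (\<gamma> 1) = 1" using g(2) by simp
  moreover have "d (\<gamma> 1) (\<gamma> N) = \<bar>real 1 - real N\<bar>" using g(4) N1 unfolding N_def[symmetric] by blast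
  then have "d (\<gamma> 1) z = d y z - 1" using g(3) RN N1 unfolding N_def[symmetric] by simp
  ultimately show ?thesis by blast
qed

lemma hd_step:
  assumes M: "Metric_space X d" and G: "discretely_geodesic X d"
    and S: "stable_intervals X d \<beta>"
    and x: "x \<in> X" and y: "y \<in> X" and y': "y' \<in> X" and one: "d y' y = 1"
    and v': "v' \<in> interval X d x y'"
  shows "\<exists>v\<in>interval X d x y. d v' v \<le> \<beta>"
proof -
  interpret Metric_space X d by fact
  have H: "hausdorff_distance d (interval X d x y') (interval X d x y) \<le> ereal \<beta>"
    using S x y y' one unfolding stable_intervals_def by blast
  have xin: "x \<in> interval X d x y" using x y unfolding interval_def by simp
  have v'X: "v' \<in> X" using v' unfolding interval_def by simp
  have ints: "\<And>a. a \<in> interval X d x y \<Longrightarrow> d v' a \<in> \<int>"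
    using G v'X unfolding discretely_geodesic_def interval_def by blast
  obtain a0 where a0: "a0 \<in> interval X d x y"
    "\<forall>b. b \<in> interval X d x y \<longrightarrow> nat \<lfloor>d v' a0\<rfloor> \<le> nat \<lfloor>d v' b\<rfloor>"
    using ex_has_least_nat[of "\<lambda>a. a \<in> interval X d x y" x "\<lambda>a. nat \<lfloor>d v' a\<rfloor>"] xin by blast
  have min: "d v' a0 \<le> d v' b" if bI: "b \<in> interval X d x y" for b
  proof -
    have "nat \<lfloor>d v' a0\<rfloor> \<le> nat \<lfloor>d v' b\<rfloor>" using a0 bI by blast
    moreover obtain i where "d v' a0 = of_int i" using ints[OF a0(1)] by (auto elim: Ints_cases)
    moreover obtain j where "d v' b = of_int j" using ints[OF bI] by (auto elim: Ints_cases)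
    moreover have "d v' a0 \<ge> 0" "d v' b \<ge> 0" by auto
    ultimately show ?thesis by auto
  qed
  have "ereal (d v' a0) \<le> (INF b\<in>interval X d x y. ereal (d v' b))"
    by (rule INF_greatest) (simp add: min)
  also have "\<dots> \<le> (SUP a\<in>interval X d x y'. INF b\<in>interval X d x y. ereal (d a b))"
    using v' by (rule SUP_upper)
  also have "\<dots> \<le> ereal \<beta>" using H unfolding hausdorff_distance_def by simp
  finally show ?thesis using a0(1) by auto
qed

theorem lemma5p11:
  fixes X :: "'a set" and d :: "'a \<Rightarrow> 'a \<Rightarrow> real" and \<beta> :: real
  assumes "Metric_space X d"
    and "discretely_geodesic X d"
    and "stable_intervals X d \<beta>"
    and "x \<in> X" and "y \<in> X" and "z \<in> X"
  shows "\<exists>v\<in>interval X d x y. d z v \<le> \<beta> * (2 * gromov_product d x y z)"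
proof -
  interpret Metric_space X d by fact
  have ints: "\<And>a b. a \<in> X \<Longrightarrow> b \<in> X \<Longrightarrow> d a b \<in> \<int>"
    using assms(2) unfolding discretely_geodesic_def by blast
  have main: "\<forall>y\<in>X. nat \<lfloor>d z y\<rfloor> = n \<longrightarrow>
      (\<exists>v\<in>interval X d x y. d z v \<le> \<beta> * (d z x + d z y - d x y))" for n
  proof (induction n)
    case 0
    show ?case
    proof (intro ballI impI)
      fix y assume y: "y \<in> X" and "nat \<lfloor>d z y\<rfloor> = 0"
      then have "d z y < 1" by linarith
      then have "d z y = 0" using int_pos_ge1[OF ints[OF assms(6) y]] nonneg[of z y] by linarith
      then have zy: "z = y" using y assms(6) by simp
      have "z \<in> interval X d x y" using zy y assms(4) unfolding interval_def by simp
      moreover have "d z x + d z y - d x y = 0" using zy y assms(4) commute[of x y] by simp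
      ultimately show "\<exists>v\<in>interval X d x y. d z v \<le> \<beta> * (d z x + d z y - d x y)"
        using zy y by force
    qed
  next
    case (Suc n)
    show ?case
    proof (intro ballI impI)
      fix y assume y: "y \<in> X" and n: "nat \<lfloor>d z y\<rfloor> = Suc n"
      have ne: "y \<noteq> z" using n y assms(6) by auto
      obtain y' where y': "y' \<in> X" "d y y' = 1" "d y' z = d y z - 1"
        using neighbor[OF assms(1,2) y assms(6) ne] by blast
      have "nat \<lfloor>d z y'\<rfloor> = n" using n y' commute[of z y'] commute[of z y] by linarith
      then obtain v' where v': "v' \<in> interval X d x y'"
          "d z v' \<le> \<beta> * (d z x + d z y' - d x y')"
        using Suc.IH y'(1) by blast
      have v'X: "v' \<in> X" using v' unfolding interval_def by simp
      have tri1: "d x y \<le> d x y' + d y' y" using triangle assms(4) y y' by blast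
      have tri2: "d x y' \<le> d x y + d y y'" using triangle assms(4) y y' by blast
      have dzy': "d z y' = d z y - 1" using y' commute[of z y'] commute[of z y] by simp
      show "\<exists>v\<in>interval X d x y. d z v \<le> \<beta> * (d z x + d z y - d x y)"
      proof (cases "d x y' = d x y - 1")
        case True
        have "v' \<in> interval X d x y"
        proof -
          have "d x v' + d v' y' = d x y'" using v' unfolding interval_def by simp
          moreover have "d v' y \<le> d v' y' + d y' y" using triangle v'X y y' by blast
          moreover have "d x y \<le> d x v' + d v' y" using triangle v'X y assms(4) by blast
          moreover have "d y' y = 1" using y' commute by simp
          ultimately show ?thesis using v'X True unfolding interval_def by simp
        qed
        moreover have eq: "d z x + d z y' - d x y' = d z x + d z y - d x y" using True dzy' by simp
        moreover have "d z v' \<le> \<beta> * (d z x + d z y - d x y)" using v'(2) unfolding eq .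
        ultimately show ?thesis by blast
      next
        case False
        have "d x y' - (d x y - 1) \<in> \<int>" using ints assms(4) y y' by (simp add: Ints_diff)
        moreover have "d x y' - (d x y - 1) > 0" using False tri1 y' commute[of y' y] by simp
        ultimately have ge: "d x y' \<ge> d x y" using int_pos_ge1 by fastforce
        obtain v where v: "v \<in> interval X d x y" "d v' v \<le> \<beta>"
          using hd_step[OF assms(1,2,3,4) y y'(1) _ v'(1)] y' commute[of y' y] by auto
        have bpos: "\<beta> \<ge> 0" using v(2) nonneg[of v' v] by linarith
        have vX: "v \<in> X" using v unfolding interval_def by simp
        have "d z v \<le> d z v' + d v' v" using triangle assms(6) v'X vX by blast
        also have "\<dots> \<le> \<beta> * (d z x + d z y' - d x y') + \<beta>" using v' v by linarith
        also have "\<dots> = \<beta> * (d z x + d z y' - d x y' + 1)" by (simp add: algebra_simps)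
        also have "\<dots> \<le> \<beta> * (d z x + d z y - d x y)"
          by (rule mult_left_mono) (use ge dzy' bpos in linarith)+
        finally show ?thesis using v by auto
      qed
    qed
  qed
  have "2 * gromov_product d x y z = d z x + d z y - d x y"
    unfolding gromov_product_def by simp
  then show ?thesis using main assms(5) by auto
qed

end
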